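(* Let $X$ be a $T_4$ locally compact topological space and let $\kappa$ be an uncountable cardinal. Then the following are equivalent: (i) $C_0(X)$ is $\mathrm{SQ}_{<\kappa}$; (ii) $C_0(X)$ is $\mathrm{ASQ}_{<\kappa}$; (iii) for every family $\mathscr K$ of compact subsets of $X$ with $|\mathscr K|<\kappa$, the union $\bigcup\mathscr K$ is not dense in $X$.
   Context: $C_0(X)$ denotes the Banach space of real-valued continuous functions on $X$ vanishing at infinity, with the supremum norm. For a Banach space $Z$ with unit sphere $S_Z$ and a cardinal $\kappa$: $Z$ is $\mathrm{ASQ}_{<\kappa}$ if for every set $A\subset S_Z$ with $|A|<\kappa$ and every $\varepsilon>0$ there exists $y\in S_Z$ with $\|x\pm y\|\le 1+\varepsilon$ for all $x\in A$; $Z$ is $\mathrm{SQ}_{<\kappa}$ if for every set $A\subset S_Z$ with $|A|<\kappa$ there exists $y\in S_Z$ with $\|x\pm y\|\le 1$ for all $x\in A$. *)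

theory Defs
  imports "HOL-Analysis.Analysis" "HOL-Library.Equipollence"
begin

text \<open>Elements are represented extensionally (value 0 outside the topspace),
so that distinct elements of the space are distinct HOL functions.\<close>
definition C0 :: "'a topology \<Rightarrow> ('a \<Rightarrow> real) set" where
  "C0 X = {f. continuous_map X euclideanreal f \<and> (\<forall>x. x \<notin> topspace X \<longrightarrow> f x = 0) \<and>
              (\<forall>e>0. compactin X {x \<in> topspace X. e \<le> \<bar>f x\<bar>})}"

text \<open>Supremum norm (the 0 is inserted so that the empty space gets norm 0).\<close>
definition supnorm :: "'a topology \<Rightarrow> ('a \<Rightarrow> real) \<Rightarrow> real" where
  "supnorm X f = Sup (insert 0 ((\<lambda>x. \<bar>f x\<bar>) ` topspace X))"

definition C0_sphere :: "'a topology \<Rightarrow> ('a \<Rightarrow> real) set" where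
  "C0_sphere X = {f \<in> C0 X. supnorm X f = 1}"

text \<open>ASQ_{<kappa}, where the cardinal kappa is given as the cardinality of a set K.\<close>
definition C0_ASQ :: "'a topology \<Rightarrow> 'k set \<Rightarrow> bool" where
  "C0_ASQ X K \<longleftrightarrow> (\<forall>A. A \<subseteq> C0_sphere X \<longrightarrow> A \<prec> K \<longrightarrow>
     (\<forall>\<epsilon>>0. \<exists>y\<in>C0_sphere X. \<forall>f\<in>A.
        supnorm X (\<lambda>x. f x + y x) \<le> 1 + \<epsilon> \<and> supnorm X (\<lambda>x. f x - y x) \<le> 1 + \<epsilon>))"

definition C0_SQ :: "'a topology \<Rightarrow> 'k set \<Rightarrow> bool" where
  "C0_SQ X K \<longleftrightarrow> (\<forall>A. A \<subseteq> C0_sphere X \<longrightarrow> A \<prec> K \<longrightarrow>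
     (\<exists>y\<in>C0_sphere X. \<forall>f\<in>A.
        supnorm X (\<lambda>x. f x + y x) \<le> 1 \<and> supnorm X (\<lambda>x. f x - y x) \<le> 1))"

end

theory Submission
  imports Defs
begin

unbundle cardinal_syntax

lemma card_aux:
  assumes "A \<prec> K" "uncountable K"
  shows "A \<times> (UNIV::nat set) \<prec> K"
proof (cases "finite A")
  case True
  then have c: "countable (A \<times> (UNIV::nat set))" by (intro countable_SIGMA) (auto intro: countable_finite)
  have "A \<times> (UNIV::nat set) \<lesssim> (UNIV::nat set)"
    using c unfolding countable_def lepoll_def by blast
  also have "(UNIV::nat set) \<lesssim> K"
    using assms(2) infinite_le_lepoll countable_finite by metis
  finally have "A \<times> (UNIV::nat set) \<lesssim> K" .
  moreover have "\<not> A \<times> (UNIV::nat set) \<approx> K"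
    using c assms(2) countable_eqpoll[of "A \<times> (UNIV::nat set)" K] eqpoll_sym by metis
  ultimately show ?thesis unfolding lesspoll_def by blast
next
  case False
  have "|(UNIV::nat set)| \<le>o |A|"
  proof -
    have "(UNIV::nat set) \<lesssim> A" using False infinite_le_lepoll by blast
    then obtain f where "inj_on f (UNIV::nat set)" "f ` UNIV \<subseteq> A" unfolding lepoll_def by blast
    then show ?thesis using card_of_ordLeq by blast
  qed
  then have "|A \<times> (UNIV::nat set)| =o |A|"
    using card_of_Times_infinite[OF False, of "UNIV::nat set"] by blast
  then have "A \<times> (UNIV::nat set) \<approx> A"
    by (simp add: eqpoll_iff_card_of_ordIso)
  then show ?thesis using assms(1) by (rule eq_lesspoll_trans)
qed

lemma supnorm_le:
  assumes "\<And>x. x \<in> topspace X \<Longrightarrow> \<bar>f x\<bar> \<le> c" "0 \<le> c"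
  shows "supnorm X f \<le> c"
  unfolding supnorm_def using assms by (intro cSup_least) auto

lemma supnorm_ge:
  assumes "\<And>x. \<bar>f x\<bar> \<le> B" "x \<in> topspace X"
  shows "\<bar>f x\<bar> \<le> supnorm X f"
  unfolding supnorm_def
proof (rule cSup_upper)
  show "\<bar>f x\<bar> \<in> insert 0 ((\<lambda>x. \<bar>f x\<bar>) ` topspace X)" using assms by auto
  show "bdd_above (insert 0 ((\<lambda>x. \<bar>f x\<bar>) ` topspace X))"
    by (rule bdd_aboveI[of _ "max 0 B"]) (use assms(1) in \<open>auto intro: max.coboundedI2\<close>)
qed

lemma C0_bdd:
  assumes "f \<in> C0 X"
  obtains B where "\<And>x. \<bar>f x\<bar> \<le> B"
proof -
  let ?S = "{x \<in> topspace X. 1 \<le> \<bar>f x\<bar>}"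
  have cS: "compactin X ?S" and cf: "continuous_map X euclideanreal f"
    and z: "\<And>x. x \<notin> topspace X \<Longrightarrow> f x = 0"
    using assms unfolding C0_def by auto
  have "compact (f ` ?S)" using image_compactin[OF cS cf] by simp
  then obtain B where B: "\<And>y. y \<in> f ` ?S \<Longrightarrow> \<bar>y\<bar> \<le> B"
    using compact_imp_bounded bounded_real by metis
  have "\<bar>f x\<bar> \<le> max 1 B" for x
  proof (cases "x \<in> topspace X \<and> 1 \<le> \<bar>f x\<bar>")
    case True then show ?thesis using B[of "f x"] by auto
  next
    case False then show ?thesis using z[of x] by (cases "x \<in> topspace X") auto
  qed
  then show ?thesis using that by blast
qed

lemma bump:
  assumes N: "normal_space X" and H: "Hausdorff_space X" and L: "locally_compact_space X"
    and C: "compactin X C" and V: "openin X V" and CV: "C \<subseteq> V" and ne: "C \<noteq> {}"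
  obtains g where "g \<in> C0_sphere X" "\<And>x. 0 \<le> g x \<and> g x \<le> 1" "\<And>x. x \<in> C \<Longrightarrow> g x = 1"
    "\<And>x. x \<notin> V \<Longrightarrow> g x = 0"
proof -
  obtain U M where U: "openin X U" and M: "compactin X M" "closedin X M" and CU: "C \<subseteq> U" and UM: "U \<subseteq> M"
    using L C locally_compact_space_compact_closed_compact H by metis
  define W where "W = U \<inter> V"
  have oW: "openin X W" using U V W_def by auto
  have cC: "closedin X C" using compactin_imp_closedin H C by blast
  have "closedin X (topspace X - W)" using oW by auto
  moreover have "disjnt (topspace X - W) C" using CU CV W_def by (auto simp: disjnt_def)
  ultimately obtain f where f: "continuous_map X (top_of_set {0..1::real}) f"
    "f ` (topspace X - W) \<subseteq> {0}" "f ` C \<subseteq> {1}"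
    using Urysohn_lemma[OF N _ cC, of "topspace X - W" 0 1] by auto
  define g where "g x = (if x \<in> topspace X then f x else 0)" for x
  have fr: "x \<in> topspace X \<Longrightarrow> f x \<in> {0..1}" for x
    using f(1) unfolding continuous_map_def by auto
  have g01: "0 \<le> g x \<and> g x \<le> 1" for x using fr[of x] by (auto simp: g_def)
  have gc: "continuous_map X euclideanreal g"
    using continuous_map_eq[of X euclideanreal f g] f(1) continuous_map_in_subtopology g_def by auto
  have Csub: "C \<subseteq> topspace X" using C compactin_subset_topspace by blast
  have g1: "x \<in> C \<Longrightarrow> g x = 1" for x using f(3) Csub by (auto simp: g_def)
  have g0: "x \<notin> W \<Longrightarrow> g x = 0" for x using f(2) by (auto simp: g_def)
  have cpt: "compactin X {x \<in> topspace X. e \<le> \<bar>g x\<bar>}" if e: "e > 0" for e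
  proof (rule closed_compactin[OF M(1)])
    show "{x \<in> topspace X. e \<le> \<bar>g x\<bar>} \<subseteq> M" using g0 e UM W_def by fastforce
    have "closed {y::real. e \<le> \<bar>y\<bar>}" by (intro closed_Collect_le continuous_intros)
    then show "closedin X {x \<in> topspace X. e \<le> \<bar>g x\<bar>}"
      using closedin_continuous_map_preimage[OF gc, of "{y::real. e \<le> \<bar>y\<bar>}"] by simp
  qed
  have gC0: "g \<in> C0 X" unfolding C0_def using gc cpt by (auto simp: g_def)
  obtain c where c: "c \<in> C" using ne by blast
  have "supnorm X g = 1" unfolding supnorm_def
  proof (rule cSup_eq_maximum)
    show "1 \<in> insert 0 ((\<lambda>x. \<bar>g x\<bar>) ` topspace X)" using c g1 Csub by force
    show "\<And>x. x \<in> insert 0 ((\<lambda>x. \<bar>g x\<bar>) ` topspace X) \<Longrightarrow> x \<le> 1" using g01 by auto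
  qed
  then have "g \<in> C0_sphere X" using gC0 by (simp add: C0_sphere_def)
  then show ?thesis using that g01 g1 g0 W_def by auto
qed


theorem theorem2p7:
  fixes X :: "'a topology" and K :: "'k set"
  assumes "t1_space X" and "normal_space X" and "locally_compact_space X"
    and "uncountable K"
  shows "(C0_SQ X K \<longleftrightarrow> C0_ASQ X K) \<and>
         (C0_ASQ X K \<longleftrightarrow>
           (\<forall>\<K>. (\<forall>C\<in>\<K>. compactin X C) \<longrightarrow> \<K> \<prec> K \<longrightarrow>
                X closure_of (\<Union>\<K>) \<noteq> topspace X))"
proof -
  have H: "Hausdorff_space X" using assms normal_t1_imp_Hausdorff_space by blast
  have N: "normal_space X" and L: "locally_compact_space X" using assms by auto
  have S2A: "C0_ASQ X K" if sq: "C0_SQ X K"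
    unfolding C0_ASQ_def
  proof (intro allI impI)
    fix A :: "('a \<Rightarrow> real) set" and e :: real
    assume "A \<subseteq> C0_sphere X" "A \<prec> K" "e > 0"
    then obtain y where "y \<in> C0_sphere X" "\<forall>f\<in>A. supnorm X (\<lambda>x. f x + y x) \<le> 1 \<and> supnorm X (\<lambda>x. f x - y x) \<le> 1"
      using sq unfolding C0_SQ_def by blast
    then show "\<exists>y\<in>C0_sphere X. \<forall>f\<in>A. supnorm X (\<lambda>x. f x + y x) \<le> 1 + e \<and> supnorm X (\<lambda>x. f x - y x) \<le> 1 + e"
      using \<open>e > 0\<close> by force
  qed
  have A2C: "X closure_of (\<Union>\<K>) \<noteq> topspace X"
    if asq: "C0_ASQ X K" and cK: "\<forall>C\<in>\<K>. compactin X C" and lK: "\<K> \<prec> K" for \<K>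
  proof
    assume dense: "X closure_of (\<Union>\<K>) = topspace X"
    define \<K>' where "\<K>' = \<K> - {{}}"
    have "\<forall>C\<in>\<K>'. \<exists>g. g \<in> C0_sphere X \<and> (\<forall>x. 0 \<le> g x \<and> g x \<le> 1) \<and> (\<forall>x\<in>C. g x = 1)"
    proof
      fix C assume C: "C \<in> \<K>'"
      then have "compactin X C" "C \<noteq> {}" using cK \<K>'_def by auto
      moreover have "C \<subseteq> topspace X" using \<open>compactin X C\<close> compactin_subset_topspace by blast
      ultimately obtain g where "g \<in> C0_sphere X" "\<And>x. 0 \<le> g x \<and> g x \<le> 1" "\<And>x. x \<in> C \<Longrightarrow> g x = 1"
        using bump[OF N H L _ openin_topspace] by metis
      then show "\<exists>g. g \<in> C0_sphere X \<and> (\<forall>x. 0 \<le> g x \<and> g x \<le> 1) \<and> (\<forall>x\<in>C. g x = 1)" by blast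
    qed
    then obtain G where G: "\<And>C. C \<in> \<K>' \<Longrightarrow> G C \<in> C0_sphere X \<and> (\<forall>x. 0 \<le> G C x \<and> G C x \<le> 1) \<and> (\<forall>x\<in>C. G C x = 1)"
      by metis
    have Asub: "G ` \<K>' \<subseteq> C0_sphere X" using G by auto
    have "G ` \<K>' \<lesssim> \<K>" using image_lepoll subset_imp_lepoll lepoll_trans \<K>'_def
      by (metis Diff_subset)
    then have Al: "G ` \<K>' \<prec> K" using lK lesspoll_trans1 by blast
    obtain y where y: "y \<in> C0_sphere X" and yA: "\<forall>f\<in>G ` \<K>'. supnorm X (\<lambda>x. f x + y x) \<le> 1 + 1/2 \<and> supnorm X (\<lambda>x. f x - y x) \<le> 1 + 1/2"
      using asq Asub Al unfolding C0_ASQ_def by (meson half_gt_zero zero_less_one)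
    have yC0: "y \<in> C0 X" and yn: "supnorm X y = 1" using y by (auto simp: C0_sphere_def)
    obtain By where By: "\<And>x. \<bar>y x\<bar> \<le> By" using C0_bdd[OF yC0] by blast
    have yc: "continuous_map X euclideanreal y" using yC0 by (simp add: C0_def)
    define T where "T = {x \<in> topspace X. y x \<in> {-1/2..1/2}}"
    have cT: "closedin X T" unfolding T_def by (rule closedin_continuous_map_preimage[OF yc]) auto
    have "\<Union>\<K> \<subseteq> T"
    proof
      fix x assume "x \<in> \<Union>\<K>"
      then obtain C where C: "C \<in> \<K>" "x \<in> C" by blast
      then have C': "C \<in> \<K>'" using \<K>'_def by auto
      have xt: "x \<in> topspace X" using C cK compactin_subset_topspace by blast
      have g1: "G C x = 1" and g01: "\<And>z. \<bar>G C z\<bar> \<le> 1" using G[OF C'] C by auto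
      have "\<bar>G C x + y x\<bar> \<le> supnorm X (\<lambda>x. G C x + y x)"
        by (rule supnorm_ge[OF _ xt, where B="1 + By"]) (rule order_trans[OF abs_triangle_ineq add_mono[OF g01 By]])
      moreover have "\<bar>G C x - y x\<bar> \<le> supnorm X (\<lambda>x. G C x - y x)"
        by (rule supnorm_ge[OF _ xt, where B="1 + By"]) (rule order_trans[OF abs_triangle_ineq4 add_mono[OF g01 By]])
      ultimately have "\<bar>1 + y x\<bar> \<le> 3/2" "\<bar>1 - y x\<bar> \<le> 3/2" using yA C' g1 by force+
      then show "x \<in> T" unfolding T_def using xt by auto
    qed
    then have "topspace X \<subseteq> T" using closure_of_minimal[OF _ cT] dense by metis
    then have "supnorm X y \<le> 1/2" by (intro supnorm_le) (auto simp: T_def)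
    then show False using yn by simp
  qed
  have C2S: "C0_SQ X K"
    if iii: "\<forall>\<K>. (\<forall>C\<in>\<K>. compactin X C) \<longrightarrow> \<K> \<prec> K \<longrightarrow> X closure_of (\<Union>\<K>) \<noteq> topspace X"
    unfolding C0_SQ_def
  proof (intro allI impI)
    fix A :: "('a \<Rightarrow> real) set"
    assume As: "A \<subseteq> C0_sphere X" and Al: "A \<prec> K"
    define \<K> where "\<K> = (\<lambda>(f,n). {x \<in> topspace X. inverse (real (Suc n)) \<le> \<bar>f x\<bar>}) ` (A \<times> (UNIV::nat set))"
    have cK: "\<forall>C\<in>\<K>. compactin X C"
      using As unfolding \<K>_def C0_sphere_def C0_def by auto
    have "\<K> \<prec> K" unfolding \<K>_def
      using image_lepoll card_aux[OF Al assms(4)] lesspoll_trans1 by blast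
    then have nd: "X closure_of (\<Union>\<K>) \<noteq> topspace X" using iii cK by blast
    define V where "V = topspace X - X closure_of (\<Union>\<K>)"
    obtain p where p: "p \<in> V" using nd closure_of_subset_topspace[of X "\<Union>\<K>"] unfolding V_def by auto
    have oV: "openin X V" unfolding V_def by (intro openin_diff) auto
    have pt: "p \<in> topspace X" using p V_def by auto
    obtain y where y: "y \<in> C0_sphere X" "\<And>x. 0 \<le> y x \<and> y x \<le> 1" "\<And>x. x \<notin> V \<Longrightarrow> y x = 0"
    proof -
      have cp: "compactin X {p}" using pt by simp
      have sub: "{p} \<subseteq> V" using p by simp
      obtain g where "g \<in> C0_sphere X" "\<And>x. 0 \<le> g x \<and> g x \<le> 1" "\<And>x. x \<notin> V \<Longrightarrow> g x = 0"
        using bump[OF N H L cp oV sub insert_not_empty] by metis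
      then show ?thesis using that by blast
    qed
    have zero: "f x = 0" if "f \<in> A" "x \<in> V" for f x
    proof (rule ccontr)
      assume "f x \<noteq> 0"
      then obtain n where n: "inverse (real (Suc n)) < \<bar>f x\<bar>"
        using reals_Archimedean[of "\<bar>f x\<bar>"] by auto
      have "x \<in> topspace X" using that V_def by blast
      then have "x \<in> {x \<in> topspace X. inverse (real (Suc n)) \<le> \<bar>f x\<bar>}" using n by simp
      moreover have "{x \<in> topspace X. inverse (real (Suc n)) \<le> \<bar>f x\<bar>} \<in> \<K>"
        unfolding \<K>_def using that(1) by (intro image_eqI[of _ _ "(f, n)"]) auto
      ultimately have "x \<in> \<Union>\<K>" by blast
      then have "x \<in> X closure_of (\<Union>\<K>)" using closure_of_subset_Int[of X "\<Union>\<K>"] V_def that by blast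
      then show False using that V_def by blast
    qed
    have bnd: "\<bar>f x\<bar> \<le> 1" if "f \<in> A" "x \<in> topspace X" for f x
    proof -
      have "f \<in> C0 X" "supnorm X f = 1" using that As by (auto simp: C0_sphere_def)
      then obtain B where "\<And>x. \<bar>f x\<bar> \<le> B" using C0_bdd by blast
      then show ?thesis using supnorm_ge that \<open>supnorm X f = 1\<close> by metis
    qed
    have "supnorm X (\<lambda>x. f x + y x) \<le> 1 \<and> supnorm X (\<lambda>x. f x - y x) \<le> 1" if f: "f \<in> A" for f
    proof -
      have "\<bar>f x + y x\<bar> \<le> 1 \<and> \<bar>f x - y x\<bar> \<le> 1" if x: "x \<in> topspace X" for x
      proof (cases "x \<in> V")
        case True then show ?thesis using zero[OF f True] y(2)[of x] by auto
      next
        case False then show ?thesis using y(3)[OF False] bnd[OF f x] by auto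
      qed
      then show ?thesis by (auto intro!: supnorm_le)
    qed
    then show "\<exists>y\<in>C0_sphere X. \<forall>f\<in>A. supnorm X (\<lambda>x. f x + y x) \<le> 1 \<and> supnorm X (\<lambda>x. f x - y x) \<le> 1"
      using y(1) by blast
  qed
  show ?thesis using S2A A2C C2S by blast
qed

end
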